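(* Let $(F_i)_{i\in\mathbb{N}}$ be functions $F_i\colon\mathbb{N}\to(0,\infty)$, $(X_i(0))_{i\in\mathbb{N}}\subset\mathbb{N}$, and let $T_1,T_2,\dots$ be the explosion times of independent birth processes $\Xi_1,\Xi_2,\dots$, where $\Xi_i$ has rate function $F_i$ and initial value $X_i(0)$. Assume there is an infinite set $B\subset\mathbb{N}$ with $\sum_{k=1}^\infty\sup_{i\in B}1/F_i(k)<\infty$. Then $$\min_{i=1,\dots,A}T_i\to0\quad\text{in distribution as }A\to\infty.$$
   Context: $\mathbb{N}=\{1,2,\dots\}$. $\Xi_i$ has independent sojourn times $\tau_i(k)$, $k\ge X_i(0)$, exponential with rate $F_i(k)$, and explosion time $T_i=\sum_{k\ge X_i(0)}\tau_i(k)\in(0,\infty]$; all $\tau_i(k)$, $i,k$, are independent. *)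

theory Defs
  imports "HOL-Probability.Probability"
begin

text \<open>Explosion time of the birth process with sojourn times tau k (k \<ge> x0):
  T = sum over k \<ge> x0 of tau k, valued in [0,\<infinity>].\<close>
definition explosion_time :: "(nat \<Rightarrow> 'a \<Rightarrow> real) \<Rightarrow> nat \<Rightarrow> 'a \<Rightarrow> ennreal" where
  "explosion_time tau x0 \<omega> = (\<Sum>n. ennreal (tau (x0 + n) \<omega>))"

end

theory Submission imports Defs begin

lemma (in prob_space) block_indep:
  fixes Y :: "'i \<Rightarrow> 'a \<Rightarrow> real"
  assumes "indep_vars (\<lambda>_. borel) Y J" "\<And>j. j \<in> L \<Longrightarrow> P j \<subseteq> J" "disjoint_family_on P L"
  shows "indep_sets (\<lambda>j. sigma_sets (space M) (\<Union>p\<in>P j. {Y p -` A \<inter> space M | A. A \<in> sets borel})) L"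
proof (rule indep_sets_collect_sigma)
  have "indep_sets (\<lambda>p. {Y p -` A \<inter> space M | A. A \<in> sets borel}) J"
    using assms(1) unfolding indep_vars_def2 by simp
  then show "indep_sets (\<lambda>p. {Y p -` A \<inter> space M | A. A \<in> sets borel}) (\<Union>j\<in>L. P j)"
    by (rule indep_sets_mono_index[rotated]) (use assms(2) in auto)
  show "Int_stable {Y i -` A \<inter> space M |A. A \<in> sets borel}" for i
    apply (auto simp: Int_stable_def)
    apply (rule_tac x="A \<inter> Aa" in exI)
    apply auto
    done
  show "disjoint_family_on P L" by fact
qed

definition gsig :: "'a measure \<Rightarrow> ('i \<Rightarrow> 'a \<Rightarrow> real) \<Rightarrow> 'i set \<Rightarrow> 'a measure" where
  "gsig M Y S = sigma (space M) (\<Union>p\<in>S. {Y p -` A \<inter> space M | A. A \<in> sets borel})"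

lemma gsig_space[simp]: "space (gsig M Y S) = space M"
  unfolding gsig_def by (rule space_measure_of) auto

lemma gsig_sets: "sets (gsig M Y S) = sigma_sets (space M) (\<Union>p\<in>S. {Y p -` A \<inter> space M | A. A \<in> sets borel})"
  unfolding gsig_def by (rule sets_measure_of) auto

lemma gsig_meas: "p \<in> S \<Longrightarrow> Y p \<in> borel_measurable (gsig M Y S)"
  by (rule measurableI) (auto simp: gsig_sets)

lemma gsig_sub: "(\<And>p. p \<in> S \<Longrightarrow> Y p \<in> borel_measurable M) \<Longrightarrow> sets (gsig M Y S) \<subseteq> sets M"
  unfolding gsig_sets
  by (rule sets.sigma_sets_subset) (auto)

lemma expo_nn:
  assumes "prob_space M" "0 < l" "distributed M lborel X (exponential_density l)"
  shows "(\<integral>\<^sup>+ x. ennreal (X x) \<partial>M) = ennreal (1 / l)"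
  using nn_integral_erlang_ith_moment[of l 0 1] assms
  by (subst distributed_nn_integral[symmetric, OF assms(3)]) (auto simp: ennreal_mult')


lemma ennreal_tail_small:
  fixes g :: "nat \<Rightarrow> ennreal"
  assumes "suminf g < \<infinity>" "0 < r"
  shows "\<exists>N. (\<Sum>j. g (j + N)) < ennreal r"
proof -
  have fin: "g n < \<infinity>" for n
    using sum_le_suminf[of g "{n}"] assms(1) by (auto intro: le_less_trans)
  define h where "h n = enn2real (g n)" for n
  have gh: "g n = ennreal (h n)" for n
    using fin[of n] unfolding h_def by (simp add: less_top)
  have h0: "0 \<le> h n" for n unfolding h_def by simp
  have "summable h"
    using assms(1) h0 by (intro summable_suminf_not_top) (auto simp: gh[symmetric])
  then obtain N where N: "\<And>n. n \<ge> N \<Longrightarrow> norm (\<Sum>i. h (i + n)) < r"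
    using suminf_exist_split[OF assms(2)] by blast
  have sN: "summable (\<lambda>i. h (i + N))" using \<open>summable h\<close> by (rule summable_ignore_initial_segment)
  have "(\<Sum>j. g (j + N)) = ennreal (\<Sum>i. h (i + N))"
    unfolding gh by (rule suminf_ennreal2) (use h0 sN in auto)
  also have "\<dots> < ennreal r"
    using N[of N] assms(2) suminf_nonneg[OF sN] h0 by (auto simp: ennreal_less_iff)
  finally show ?thesis by blast
qed

lemma ennreal_tail_mono:
  fixes g :: "nat \<Rightarrow> ennreal"
  assumes "K \<le> m"
  shows "(\<Sum>j. g (j + m)) \<le> (\<Sum>j. g (j + K))"
proof -
  have "(\<Sum>j. g (j + K)) = (\<Sum>j. g (j + (m - K) + K)) + (\<Sum>j<m - K. g (j + K))"
    by (rule suminf_offset) simp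
  also have "(\<Sum>j. g (j + (m - K) + K)) = (\<Sum>j. g (j + m))"
    using assms by (simp add: add.assoc)
  finally show ?thesis by (metis le_iff_add)
qed

theorem lemma6:
  fixes M :: "'a measure"
    and F :: "nat \<Rightarrow> nat \<Rightarrow> real"
    and X0 :: "nat \<Rightarrow> nat"
    and tau :: "nat \<Rightarrow> nat \<Rightarrow> 'a \<Rightarrow> real"
    and B :: "nat set"
  assumes "prob_space M"
    and F_pos: "\<And>i k. 1 \<le> i \<Longrightarrow> 1 \<le> k \<Longrightarrow> 0 < F i k"
    and X0_pos: "\<And>i. 1 \<le> i \<Longrightarrow> 1 \<le> X0 i"
    and tau_exp: "\<And>i k. 1 \<le> i \<Longrightarrow> X0 i \<le> k \<Longrightarrow>
        distributed M lborel (tau i k) (exponential_density (F i k))"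
    and tau_indep: "prob_space.indep_vars M (\<lambda>_. borel) (\<lambda>(i, k). tau i k)
        {(i, k). 1 \<le> i \<and> X0 i \<le> k}"
    and B_sub: "B \<subseteq> {1..}"
    and B_inf: "infinite B"
    and B_sum: "(\<Sum>k. (SUP i\<in>B. ennreal (1 / F i (Suc k)))) < \<infinity>"
  shows "\<forall>x::real. 0 < x \<longrightarrow>
     (\<lambda>A. measure M {\<omega> \<in> space M.
        (MIN i\<in>{1..A}. explosion_time (tau i) (X0 i) \<omega>) \<le> ennreal x}) \<longlonglongrightarrow> 1"
proof (intro allI impI)
  fix x :: real assume x: "0 < x"
  interpret P: prob_space M by fact
  define Y where "Y = (\<lambda>(i,k). tau i k)"
  define J where "J = {(i, k). 1 \<le> i \<and> X0 i \<le> k}"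
  have indep: "P.indep_vars (\<lambda>_. borel) Y J" using tau_indep unfolding Y_def J_def .
  have Fpos: "0 < F i k" if "1 \<le> i" "X0 i \<le> k" for i k
    using F_pos X0_pos that by (meson order_trans)
  have tau_meas: "tau i k \<in> borel_measurable M" if "1 \<le> i" "X0 i \<le> k" for i k
    using distributed_measurable[OF tau_exp[OF that]] by simp
  define S where "S k = (SUP i\<in>B. ennreal (1 / F i k))" for k
  have B_ne: "B \<noteq> {}" using B_inf by auto
  have SU: "ennreal (1 / F i k) \<le> S k" if "i \<in> B" for i k
    using that unfolding S_def by (rule SUP_upper)
  have Bsum': "suminf (\<lambda>j. S (Suc j)) < \<infinity>" using B_sum unfolding S_def .
  obtain N where N: "(\<Sum>j. S (Suc (j + N))) < ennreal (x/4)"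
    using ennreal_tail_small[of "\<lambda>j. S (Suc j)" "x/4", OF Bsum'] x by auto
  define K where "K = Suc N"
  have K1: "1 \<le> K" unfolding K_def by simp
  have tailK: "(\<Sum>j. S (j + K)) < ennreal (x/4)"
    using N unfolding K_def by simp
  have S_fin: "S k < \<infinity>" if "1 \<le> k" for k
  proof -
    have "S k = S (Suc (k - 1))" using that by simp
    also have "\<dots> \<le> suminf (\<lambda>j. S (Suc j))"
      using sum_le_suminf[of "\<lambda>j. S (Suc j)" "{k - 1}"] by simp
    finally show ?thesis using Bsum' by (rule le_less_trans)
  qed
  define s where "s k = enn2real (S k)" for k
  have Ss: "S k = ennreal (s k)" if "1 \<le> k" for k
    using S_fin[OF that] unfolding s_def by (simp add: less_top)
  have Fs: "1 / F i k \<le> s k" if "i \<in> B" "1 \<le> k" for i k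
  proof -
    have "ennreal (1 / F i k) \<le> ennreal (s k)" using SU[OF that(1), of k] Ss[OF that(2)] by simp
    then show ?thesis by (simp add: ennreal_le_iff s_def)
  qed
  have s_pos: "0 < s k" if "1 \<le> k" for k
  proof -
    obtain i where i: "i \<in> B" using B_ne by auto
    have "0 < F i k" using F_pos[OF _ that] i B_sub by auto
    then show ?thesis using Fs[OF i that] by (meson divide_pos_pos less_le_trans zero_less_one)
  qed
  have Fs': "1 / s k \<le> F i k" if "i \<in> B" "1 \<le> k" for i k
  proof -
    have "0 < F i k" using F_pos[OF _ that(2)] that(1) B_sub by auto
    then show ?thesis using Fs[OF that] s_pos[OF that(2)]
      by (auto simp: divide_le_eq pos_divide_le_eq mult.commute)
  qed
  define \<delta> where "\<delta> = x / (2 * K)"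
  have \<delta>_pos: "0 < \<delta>" unfolding \<delta>_def using x K1 by simp
  define q where "q = (\<Prod>k\<in>{1..<K}. 1 - exp (- \<delta> / s k))"
  have q_fac: "0 < 1 - exp (- \<delta> / s k) \<and> 1 - exp (- \<delta> / s k) \<le> 1" if "1 \<le> k" for k
    using s_pos[OF that] \<delta>_pos by simp
  have q_pos: "0 < q" unfolding q_def using q_fac by (intro prod_pos) auto
  have q_le1: "q \<le> 1" unfolding q_def using q_fac by (intro prod_le_1) (auto simp: less_imp_le)
  define p where "p = q / 2"
  have p_pos: "0 < p" and p_le: "p \<le> 1" using q_pos q_le1 unfolding p_def by auto
  define m where "m i = max K (X0 i)" for i
  define tail where "tail i \<omega> = (\<Sum>n. ennreal (tau i (n + m i) \<omega>))" for i \<omega>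
  define E where "E i = {\<omega>\<in>space M. tail i \<omega> \<le> ennreal (x/2)} \<inter>
      (\<Inter>k\<in>{X0 i..<K}. {\<omega>\<in>space M. tau i k \<omega> \<le> \<delta>})" for i
  define T where "T i \<omega> = explosion_time (tau i) (X0 i) \<omega>" for i \<omega>
  have E_T: "T i \<omega> \<le> ennreal x" if "i \<in> B" "\<omega> \<in> E i" for i \<omega>
  proof -
    define d where "d = m i - X0 i"
    have md: "m i = X0 i + d" unfolding d_def m_def by auto
    have dK: "d \<le> K" unfolding d_def m_def by auto
    have tl: "tail i \<omega> \<le> ennreal (x/2)" using that(2) unfolding E_def by auto
    have hd: "tau i (X0 i + n) \<omega> \<le> \<delta>" if "n < d" for n
    proof -
      have "X0 i + n < K" using that md unfolding m_def by (auto simp: max_def split: if_splits)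
      then show ?thesis using \<open>\<omega> \<in> E i\<close> unfolding E_def by auto
    qed
    have "(\<Sum>n<d. ennreal (tau i (X0 i + n) \<omega>)) \<le> (\<Sum>n<d. ennreal \<delta>)"
      by (rule sum_mono) (use hd in \<open>auto intro: ennreal_leI\<close>)
    also have "\<dots> = ennreal (\<Sum>n<d. \<delta>)" by (rule sum_ennreal) (use \<delta>_pos in auto)
    also have "\<dots> \<le> ennreal (x/2)"
    proof (rule ennreal_leI)
      have "(\<Sum>n<d. \<delta>) = d * \<delta>" by simp
      also have "\<dots> \<le> K * \<delta>" using dK \<delta>_pos by (intro mult_right_mono) auto
      also have "\<dots> = x / 2" unfolding \<delta>_def using K1 by simp
      finally show "(\<Sum>n<d. \<delta>) \<le> x / 2" .
    qed
    finally have hs: "(\<Sum>n<d. ennreal (tau i (X0 i + n) \<omega>)) \<le> ennreal (x/2)" .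
    have "T i \<omega> = (\<Sum>n. ennreal (tau i (X0 i + n) \<omega>))" unfolding T_def explosion_time_def ..
    also have "\<dots> = (\<Sum>n. ennreal (tau i (X0 i + (n + d)) \<omega>)) + (\<Sum>n<d. ennreal (tau i (X0 i + n) \<omega>))"
      by (rule suminf_offset) simp
    also have "(\<Sum>n. ennreal (tau i (X0 i + (n + d)) \<omega>)) = tail i \<omega>"
      unfolding tail_def md by (simp add: add_ac)
    finally have "T i \<omega> = tail i \<omega> + (\<Sum>n<d. ennreal (tau i (X0 i + n) \<omega>))" .
    also have "\<dots> \<le> ennreal (x/2) + ennreal (x/2)" by (rule add_mono[OF tl hs])
    also have "\<dots> = ennreal x" using x by (simp add: ennreal_plus[symmetric])
    finally show ?thesis .
  qed
  define blk where "blk i = {(i', k). i' = i \<and> X0 i \<le> k}" for i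
  have le_sets: "{\<omega>\<in>space N. f \<omega> \<le> c} \<in> sets N" if "f \<in> borel_measurable N" for N and f :: "'a \<Rightarrow> real" and c
    using that by measurable
  have le_sets': "{\<omega>\<in>space N. f \<omega> \<le> c} \<in> sets N" if "f \<in> borel_measurable N" for N and f :: "'a \<Rightarrow> ennreal" and c
    using that by measurable
  have tail_meas: "tail i \<in> borel_measurable N"
    if "\<And>n. (\<lambda>\<omega>. tau i (n + m i) \<omega>) \<in> borel_measurable N" for N i
    unfolding tail_def[abs_def] using that by measurable
  have E_sets: "E i \<in> sets N" if "space N = space M" "\<And>k. X0 i \<le> k \<Longrightarrow> tau i k \<in> borel_measurable N" for N i
  proof -
    have tm: "tail i \<in> borel_measurable N" by (rule tail_meas) (rule that(2), simp add: m_def)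
    have Tl: "{\<omega>\<in>space M. tail i \<omega> \<le> ennreal (x/2)} \<in> sets N"
      using le_sets'[OF tm] that(1) by simp
    have Ev: "{\<omega>\<in>space M. tau i k \<omega> \<le> \<delta>} \<in> sets N" if "k \<in> {X0 i..<K}" for k
      using le_sets[OF \<open>\<And>k. X0 i \<le> k \<Longrightarrow> tau i k \<in> borel_measurable N\<close>] that \<open>space N = space M\<close> by auto
    show ?thesis
    proof (cases "{X0 i..<K} = {}")
      case True then show ?thesis using Tl unfolding E_def by simp
    next
      case False
      then show ?thesis unfolding E_def using Tl Ev by (intro sets.Int sets.finite_INT) auto
    qed
  qed
  have E_meas: "E i \<in> sets (gsig M Y (blk i))" if "i \<in> B" for i
  proof (rule E_sets)
    show "space (gsig M Y (blk i)) = space M" by simp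
    fix k assume "X0 i \<le> k"
    then have "(i, k) \<in> blk i" unfolding blk_def by simp
    from gsig_meas[OF this, of Y M] show "tau i k \<in> borel_measurable (gsig M Y (blk i))"
      by (simp add: Y_def)
  qed
  have E_prob: "p \<le> P.prob (E i)" if iB: "i \<in> B" for i
  proof -
    have i1: "1 \<le> i" using iB B_sub by auto
    define Tl where "Tl = {\<omega>\<in>space M. tail i \<omega> \<le> ennreal (x/2)}"
    define Ev where "Ev k = {\<omega>\<in>space M. tau i k \<omega> \<le> \<delta>}" for k
    have tmM: "(\<lambda>\<omega>. tau i (n + m i) \<omega>) \<in> borel_measurable M" for n
      by (rule tau_meas[OF i1]) (simp add: m_def)
    have tailM: "tail i \<in> borel_measurable M" by (rule tail_meas) (rule tmM)
    have Tl_ev: "Tl \<in> P.events" unfolding Tl_def by (rule le_sets'[OF tailM])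
    have int_tail: "(\<integral>\<^sup>+\<omega>. tail i \<omega> \<partial>M) < ennreal (x/4)"
    proof -
      have "(\<integral>\<^sup>+\<omega>. tail i \<omega> \<partial>M) = (\<Sum>n. \<integral>\<^sup>+\<omega>. ennreal (tau i (n + m i) \<omega>) \<partial>M)"
        unfolding tail_def by (rule nn_integral_suminf) (use tmM in measurable)
      also have "\<dots> = (\<Sum>n. ennreal (1 / F i (n + m i)))"
        by (intro suminf_cong expo_nn[OF assms(1)] Fpos[OF i1] tau_exp[OF i1]) (auto simp: m_def)
      also have "\<dots> \<le> (\<Sum>n. S (n + m i))"
        by (intro suminf_le SU iB) auto
      also have "\<dots> \<le> (\<Sum>n. S (n + K))"
        by (rule ennreal_tail_mono) (simp add: m_def)
      also have "\<dots> < ennreal (x/4)" by (rule tailK)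
      finally show ?thesis .
    qed
    have Tl_prob: "1/2 \<le> P.prob Tl"
    proof -
      define c where "c = ennreal (2/x)"
      have sub: "space M - Tl \<subseteq> {\<omega>\<in>space M. 1 \<le> c * tail i \<omega>}"
      proof safe
        fix \<omega> assume \<omega>: "\<omega> \<in> space M" "\<omega> \<notin> Tl"
        then have "ennreal (x/2) \<le> tail i \<omega>" unfolding Tl_def by auto
        then have "c * ennreal (x/2) \<le> c * tail i \<omega>" by (rule mult_left_mono) simp
        moreover have "c * ennreal (x/2) = 1" unfolding c_def using x
          by (simp add: ennreal_mult[symmetric])
        ultimately show "1 \<le> c * tail i \<omega>" by simp
      qed
      have "emeasure M (space M - Tl) \<le> emeasure M {\<omega>\<in>space M. 1 \<le> c * tail i \<omega>}"
        by (rule emeasure_mono[OF sub]) (use tailM in measurable)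
      also have "\<dots> \<le> c * (\<integral>\<^sup>+\<omega>. tail i \<omega> * indicator (space M) \<omega> \<partial>M)"
        by (rule nn_integral_Markov_inequality) (use tailM in auto)
      also have "(\<integral>\<^sup>+\<omega>. tail i \<omega> * indicator (space M) \<omega> \<partial>M) = (\<integral>\<^sup>+\<omega>. tail i \<omega> \<partial>M)"
        by (rule nn_integral_cong) simp
      also have "c * (\<integral>\<^sup>+\<omega>. tail i \<omega> \<partial>M) \<le> c * ennreal (x/4)"
        using int_tail by (intro mult_left_mono) auto
      also have "\<dots> = ennreal (1/2)" unfolding c_def using x by (simp add: ennreal_mult[symmetric])
      finally have h: "emeasure M (space M - Tl) \<le> ennreal (1/2)" .
      have "P.prob (space M - Tl) \<le> 1/2"
        using h unfolding P.emeasure_eq_measure by (subst (asm) ennreal_le_iff) auto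
      then show ?thesis using P.prob_compl[OF Tl_ev] by simp
    qed
    have Ev_prob: "1 - exp (- \<delta> / s k) \<le> P.prob (Ev k)" if "k \<in> {X0 i..<K}" for k
    proof -
      have k1: "1 \<le> k" using that X0_pos[OF i1] by auto
      have "P.prob (Ev k) = 1 - exp (- \<delta> * F i k)" unfolding Ev_def
        using P.exponential_distributedD_le[OF tau_exp[OF i1] _ Fpos[OF i1]] \<delta>_pos that by auto
      moreover have "- \<delta> * F i k \<le> - \<delta> / s k"
        using Fs'[OF iB k1] \<delta>_pos by (simp add: divide_inverse mult_left_mono)
      ultimately show ?thesis by simp
    qed
    define L where "L = insert None (Some ` {X0 i..<K})"
    define Pb where "Pb j = (case j of None \<Rightarrow> {(i', k). i' = i \<and> m i \<le> k} | Some k \<Rightarrow> {(i, k)})" for j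
    have indL: "P.indep_sets (\<lambda>j. sigma_sets (space M) (\<Union>p\<in>Pb j. {Y p -` A \<inter> space M | A. A \<in> sets borel})) L"
    proof (rule P.block_indep[OF indep])
      show "Pb j \<subseteq> J" if "j \<in> L" for j
        using that i1 unfolding L_def Pb_def J_def m_def by auto
      show "disjoint_family_on Pb L"
        unfolding disjoint_family_on_def L_def Pb_def m_def by auto
    qed
    define A where "A j = (case j of None \<Rightarrow> Tl | Some k \<Rightarrow> Ev k)" for j
    have A_in: "A j \<in> sigma_sets (space M) (\<Union>p\<in>Pb j. {Y p -` A \<inter> space M | A. A \<in> sets borel})" if "j \<in> L" for j
    proof (cases j)
      case None
      have "tail i \<in> borel_measurable (gsig M Y (Pb j))"
      proof (rule tail_meas)
        fix n have "(i, n + m i) \<in> Pb j" unfolding Pb_def None by simp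
        from gsig_meas[OF this, of Y M] show "(\<lambda>\<omega>. tau i (n + m i) \<omega>) \<in> borel_measurable (gsig M Y (Pb j))"
          by (simp add: Y_def)
      qed
      from le_sets'[OF this] show ?thesis unfolding gsig_sets[symmetric] A_def None Tl_def by simp
    next
      case (Some k)
      have "(i, k) \<in> Pb j" unfolding Pb_def Some by simp
      from le_sets[OF gsig_meas[OF this, of Y M]] show ?thesis
        unfolding gsig_sets[symmetric] A_def Some Ev_def by (simp add: Y_def)
    qed
    have "P.prob (\<Inter>j\<in>L. A j) = (\<Prod>j\<in>L. P.prob (A j))"
      by (rule P.indep_setsD[OF indL]) (use A_in in \<open>auto simp: L_def\<close>)
    moreover have "(\<Inter>j\<in>L. A j) = E i"
      unfolding L_def A_def E_def Tl_def Ev_def by auto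
    moreover have "(\<Prod>j\<in>L. P.prob (A j)) = P.prob Tl * (\<Prod>k\<in>{X0 i..<K}. P.prob (Ev k))"
      unfolding L_def A_def by (simp add: prod.reindex)
    ultimately have PE: "P.prob (E i) = P.prob Tl * (\<Prod>k\<in>{X0 i..<K}. P.prob (Ev k))" by simp
    have "q \<le> (\<Prod>k\<in>{X0 i..<K}. 1 - exp (- \<delta> / s k))"
    proof -
      have sub: "{X0 i..<K} \<subseteq> {1..<K}" using X0_pos[OF i1] by auto
      have "q = (\<Prod>k\<in>{1..<K} - {X0 i..<K}. 1 - exp (- \<delta> / s k)) * (\<Prod>k\<in>{X0 i..<K}. 1 - exp (- \<delta> / s k))"
        unfolding q_def by (rule prod.subset_diff[OF sub]) simp
      also have "\<dots> \<le> 1 * (\<Prod>k\<in>{X0 i..<K}. 1 - exp (- \<delta> / s k))"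
        using q_fac sub by (intro mult_right_mono prod_le_1 prod_nonneg) (auto simp: less_imp_le)
      finally show ?thesis by simp
    qed
    also have "\<dots> \<le> (\<Prod>k\<in>{X0 i..<K}. P.prob (Ev k))"
      using q_fac Ev_prob X0_pos[OF i1] by (intro prod_mono) (auto simp: less_imp_le)
    finally have "q \<le> (\<Prod>k\<in>{X0 i..<K}. P.prob (Ev k))" .
    then have "q * (1/2) \<le> (\<Prod>k\<in>{X0 i..<K}. P.prob (Ev k)) * P.prob Tl"
      using Tl_prob q_pos by (intro mult_mono) auto
    then show ?thesis unfolding p_def PE by (simp add: mult.commute)
  qed
  have indepB: "P.indep_sets (\<lambda>i. sets (gsig M Y (blk i))) B"
    unfolding gsig_sets
  proof (rule P.block_indep[OF indep])
    show "blk j \<subseteq> J" if "j \<in> B" for j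
      using that B_sub unfolding blk_def J_def by auto
    show "disjoint_family_on blk B"
      unfolding disjoint_family_on_def blk_def by auto
  qed
  have E_ev: "E i \<in> P.events" if "i \<in> B" for i
  proof -
    have i1: "1 \<le> i" using that B_sub by auto
    have "sets (gsig M Y (blk i)) \<subseteq> sets M"
      by (rule gsig_sub) (auto simp: blk_def Y_def intro: tau_meas[OF i1])
    then show ?thesis using E_meas[OF that] by auto
  qed
  have key: "P.prob (\<Inter>i\<in>I. space M - E i) \<le> (1 - p) ^ card I"
    if "finite I" "I \<subseteq> B" "I \<noteq> {}" for I
  proof -
    have "P.prob (\<Inter>i\<in>I. space M - E i) = (\<Prod>i\<in>I. P.prob (space M - E i))"
    proof (rule P.indep_setsD[OF indepB that(2,3,1)], safe)
      fix i assume "i \<in> I"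
      then have "E i \<in> sets (gsig M Y (blk i))" using E_meas that(2) by auto
      from sets.compl_sets[OF this] show "space M - E i \<in> sets (gsig M Y (blk i))" by simp
    qed
    also have "\<dots> \<le> (\<Prod>i\<in>I. 1 - p)"
    proof (rule prod_mono, safe)
      fix i assume "i \<in> I"
      then have iB: "i \<in> B" using that(2) by auto
      show "0 \<le> P.prob (space M - E i)" by simp
      show "P.prob (space M - E i) \<le> 1 - p"
        using P.prob_compl[OF E_ev[OF iB]] E_prob[OF iB] by simp
    qed
    also have "\<dots> = (1 - p) ^ card I" by simp
    finally show ?thesis .
  qed
  define c where "c A = card (B \<inter> {1..A})" for A
  have c_lim: "filterlim c at_top sequentially"
  proof (subst filterlim_at_top, safe)
    fix Z
    obtain S0 where S0: "S0 \<subseteq> B" "finite S0" "card S0 = Z"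
      using infinite_arbitrarily_large[OF B_inf] by blast
    show "eventually (\<lambda>A. Z \<le> c A) sequentially"
    proof (rule eventually_sequentiallyI[of "Max (insert 0 S0)"])
      fix A assume A: "Max (insert 0 S0) \<le> A"
      have "S0 \<subseteq> B \<inter> {1..A}"
      proof
        fix y assume y: "y \<in> S0"
        have "y \<le> Max (insert 0 S0)" using S0(2) y by simp
        then show "y \<in> B \<inter> {1..A}" using y S0(1) B_sub A by auto
      qed
      then have "card S0 \<le> card (B \<inter> {1..A})" by (rule card_mono[rotated]) simp
      then show "Z \<le> c A" unfolding c_def S0(3) .
    qed
  qed
  have lower: "eventually (\<lambda>A. 1 - (1 - p) ^ c A \<le> measure M {\<omega> \<in> space M.
        (MIN i\<in>{1..A}. explosion_time (tau i) (X0 i) \<omega>) \<le> ennreal x}) sequentially"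
  proof -
    have "eventually (\<lambda>A. 1 \<le> c A) sequentially" using c_lim by (simp add: filterlim_at_top)
    then show ?thesis
    proof (rule eventually_mono)
      fix A assume cA: "1 \<le> c A"
      define I where "I = B \<inter> {1..A}"
      have I: "finite I" "I \<subseteq> B" "I \<noteq> {}" using cA unfolding c_def I_def by auto
      define G where "G = {\<omega> \<in> space M. (MIN i\<in>{1..A}. explosion_time (tau i) (X0 i) \<omega>) \<le> ennreal x}"
      have Tm: "(\<lambda>\<omega>. explosion_time (tau i) (X0 i) \<omega>) \<in> borel_measurable M" if "i \<in> {1..A}" for i
      proof -
        have "(\<lambda>\<omega>. tau i (X0 i + n) \<omega>) \<in> borel_measurable M" for n
          using that by (intro tau_meas) auto
        then show ?thesis unfolding explosion_time_def by measurable
      qed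
      have "(\<lambda>\<omega>. MIN i\<in>{1..A}. explosion_time (tau i) (X0 i) \<omega>) \<in> borel_measurable M"
        by (rule borel_measurable_Min) (use Tm in auto)
      then have G_ev: "G \<in> P.events" unfolding G_def by (rule le_sets')
      have Iev: "(\<Inter>i\<in>I. space M - E i) \<in> P.events"
        using I E_ev by (intro sets.finite_INT) auto
      have sub: "space M - (\<Inter>i\<in>I. space M - E i) \<subseteq> G"
      proof
        fix \<omega> assume "\<omega> \<in> space M - (\<Inter>i\<in>I. space M - E i)"
        then obtain i where i: "i \<in> I" "\<omega> \<in> E i" "\<omega> \<in> space M" using I(3) by auto
        have "(MIN i\<in>{1..A}. explosion_time (tau i) (X0 i) \<omega>) \<le> explosion_time (tau i) (X0 i) \<omega>"
          using i(1) unfolding I_def by (intro Min_le) auto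
        also have "\<dots> \<le> ennreal x" using E_T[of i \<omega>] i I(2) unfolding T_def by auto
        finally show "\<omega> \<in> G" unfolding G_def using i by auto
      qed
      have "1 - (1 - p) ^ c A \<le> 1 - P.prob (\<Inter>i\<in>I. space M - E i)"
        using key[OF I] unfolding c_def I_def by simp
      also have "\<dots> = P.prob (space M - (\<Inter>i\<in>I. space M - E i))"
        using P.prob_compl[OF Iev] by simp
      also have "\<dots> \<le> P.prob G" by (rule P.finite_measure_mono[OF sub G_ev])
      finally show "1 - (1 - p) ^ c A \<le> measure M {\<omega> \<in> space M.
        (MIN i\<in>{1..A}. explosion_time (tau i) (X0 i) \<omega>) \<le> ennreal x}" unfolding G_def .
    qed
  qed
  have lim1: "(\<lambda>A. 1 - (1 - p) ^ c A) \<longlonglongrightarrow> 1"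
  proof -
    have "(\<lambda>n. (1 - p) ^ n) \<longlonglongrightarrow> 0" using p_pos p_le by (intro LIMSEQ_power_zero) auto
    from filterlim_compose[OF this c_lim] have "(\<lambda>A. (1 - p) ^ c A) \<longlonglongrightarrow> 0" .
    from tendsto_diff[OF tendsto_const this, of 1] show ?thesis by simp
  qed
  show "(\<lambda>A. measure M {\<omega> \<in> space M.
        (MIN i\<in>{1..A}. explosion_time (tau i) (X0 i) \<omega>) \<le> ennreal x}) \<longlonglongrightarrow> 1"
    by (rule tendsto_sandwich[OF lower _ lim1 tendsto_const]) (auto simp: P.prob_le_1)
qed

end
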